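(* Assume (A1). Let $\varepsilon_1\ge 0$, $x\in\mathcal{C}$ and $\beta>\max\{\beta_2(x),\beta_3(x)\}$. If $\|\nabla g(x)\|\le\varepsilon_1$, then $$\|h(x)\|\le\frac{\varepsilon_1}{\beta\,\sigma_{\min}(\mathrm{D}h(x))}\le\varepsilon_1\quad\text{and}\quad \|\mathrm{grad}_{\mathcal{M}_x}f(x)\|\le\Big(1+\frac{C_\lambda(x)}{\beta\,\sigma_{\min}(\mathrm{D}h(x))}\Big)\varepsilon_1\le 2\varepsilon_1,$$ so that $x$ is an $(\varepsilon_1,2\varepsilon_1)$-approximate first-order critical point of the problem $\min f(x)$ subject to $h(x)=0$.
   Context: Let $\mathcal{E}$ be a Euclidean space with inner product $\langle\cdot,\cdot\rangle$ and norm $\|\cdot\|$ (2-norm on $\mathbb{R}^m$), and $f\colon\mathcal{E}\to\mathbb{R}$, $h\colon\mathcal{E}\to\mathbb{R}^m$ be $C^\infty$. $\mathrm{D}h(x)$ is the differential, $\mathrm{D}h(x)^*$ its adjoint, $\sigma_1(\cdot)$ and $\sigma_{\min}(\cdot)=\sigma_m(\cdot)$ the largest and $m$-th singular values. Let $\mathcal{D}=\{x:\operatorname{rank}\mathrm{D}h(x)=m\}$ and for $x\in\mathcal{D}$ let $\lambda(x)=(\mathrm{D}h(x)^* )^\dagger[\nabla f(x)]$ ($\dagger$ = Moore–Penrose pseudo-inverse); $\lambda$ is $C^\infty$ on $\mathcal{D}$. For $\beta\ge0$, Fletcher's augmented Lagrangian is $g(x)=f(x)-\langle h(x),\lambda(x)\rangle+\beta\|h(x)\|^2$.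 For $x\in\mathcal{D}$, $\mathcal{M}_x=\{y:h(y)=h(x)\}$ and $\mathrm{grad}_{\mathcal{M}_x}f(x)=\nabla f(x)-\mathrm{D}h(x)^*[\lambda(x)]$ (the orthogonal projection of $\nabla f(x)$ onto $\ker\mathrm{D}h(x)$). (A1): there are $R,\underline{\sigma}>0$ such that every $x\in\mathcal{C}=\{x:\|h(x)\|\le R\}$ satisfies $\sigma_{\min}(\mathrm{D}h(x))\ge\underline{\sigma}$ (so $\mathcal{C}\subset\mathcal{D}$). For $x\in\mathcal{C}$: $C_\lambda(x)=\|\mathrm{D}\lambda(x)\|_{\mathrm{op}}$, $\beta_2(x)=C_\lambda(x)/\sigma_{\min}(\mathrm{D}h(x))$, $\beta_3(x)=1/\sigma_{\min}(\mathrm{D}h(x))$. A point $x\in\mathcal{D}$ is an $(\varepsilon_0,\varepsilon_1)$-approximate first-order critical point if $\|h(x)\|\le\varepsilon_0$ and $\|\mathrm{grad}_{\mathcal{M}_x}f(x)\|\le\varepsilon_1$. *)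

theory Defs
  imports "HOL-Analysis.Analysis"
begin

text \<open>C-infinity smoothness on the whole space: differentiable everywhere, and every
  directional derivative map is again smooth (coinductively, to all orders).\<close>
coinductive smooth :: "('a::real_normed_vector \<Rightarrow> 'b::real_normed_vector) \<Rightarrow> bool" where
  "(\<And>x. \<phi> differentiable (at x)) \<Longrightarrow> (\<And>v. smooth (\<lambda>x. frechet_derivative \<phi> (at x) v))
     \<Longrightarrow> smooth \<phi>"

definition grad :: "('a::euclidean_space \<Rightarrow> real) \<Rightarrow> 'a \<Rightarrow> 'a" where
  "grad \<phi> x = (THE w. (\<phi> has_derivative (\<lambda>v. w \<bullet> v)) (at x))"

definition pinv :: "('a::euclidean_space \<Rightarrow> 'b::euclidean_space) \<Rightarrow> 'b \<Rightarrow> 'a" where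
  "pinv A y = (THE x. (\<forall>z. norm (A x - y) \<le> norm (A z - y)) \<and>
       (\<forall>z. (\<forall>z'. norm (A z - y) \<le> norm (A z' - y)) \<longrightarrow> norm x \<le> norm z))"

text \<open>k-th singular value (Courant-Fischer max-min characterization; 0 if k exceeds the
  dimension of the domain).\<close>
definition singular_value :: "nat \<Rightarrow> ('a::euclidean_space \<Rightarrow> 'b::euclidean_space) \<Rightarrow> real" where
  "singular_value k A =
     (if k \<le> DIM('a) then
        Sup {Inf {norm (A v) | v. v \<in> V \<and> norm v = 1} | V. subspace V \<and> dim V = k}
      else 0)"

definition sigma_min :: "('a::euclidean_space \<Rightarrow> real^'m) \<Rightarrow> real" where
  "sigma_min A = singular_value CARD('m) A"

definition Dh :: "('a::euclidean_space \<Rightarrow> real^'m) \<Rightarrow> 'a \<Rightarrow> 'a \<Rightarrow> real^'m" where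
  "Dh h x = frechet_derivative h (at x)"

definition fullrank_set :: "('a::euclidean_space \<Rightarrow> real^'m) \<Rightarrow> 'a set" where
  "fullrank_set h = {x. dim (range (Dh h x)) = CARD('m)}"

definition lam :: "('a::euclidean_space \<Rightarrow> real) \<Rightarrow> ('a \<Rightarrow> real^'m) \<Rightarrow> 'a \<Rightarrow> real^'m" where
  "lam f h x = pinv (adjoint (Dh h x)) (grad f x)"

definition fletcher :: "('a::euclidean_space \<Rightarrow> real) \<Rightarrow> ('a \<Rightarrow> real^'m) \<Rightarrow> real \<Rightarrow> 'a \<Rightarrow> real" where
  "fletcher f h \<beta> x = f x - h x \<bullet> lam f h x + \<beta> * (norm (h x))\<^sup>2"

definition gradM :: "('a::euclidean_space \<Rightarrow> real) \<Rightarrow> ('a \<Rightarrow> real^'m) \<Rightarrow> 'a \<Rightarrow> 'a" where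
  "gradM f h x = grad f x - adjoint (Dh h x) (lam f h x)"

definition C_lam :: "('a::euclidean_space \<Rightarrow> real) \<Rightarrow> ('a \<Rightarrow> real^'m) \<Rightarrow> 'a \<Rightarrow> real" where
  "C_lam f h x = onorm (frechet_derivative (lam f h) (at x))"

definition beta2 :: "('a::euclidean_space \<Rightarrow> real) \<Rightarrow> ('a \<Rightarrow> real^'m) \<Rightarrow> 'a \<Rightarrow> real" where
  "beta2 f h x = C_lam f h x / sigma_min (Dh h x)"

definition beta3 :: "('a::euclidean_space \<Rightarrow> real^'m) \<Rightarrow> 'a \<Rightarrow> real" where
  "beta3 h x = 1 / sigma_min (Dh h x)"

definition approx_crit ::
  "('a::euclidean_space \<Rightarrow> real) \<Rightarrow> ('a \<Rightarrow> real^'m) \<Rightarrow> real \<Rightarrow> real \<Rightarrow> 'a \<Rightarrow> bool" where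
  "approx_crit f h \<epsilon>0 \<epsilon>1 x \<longleftrightarrow>
     x \<in> fullrank_set h \<and> norm (h x) \<le> \<epsilon>0 \<and> norm (gradM f h x) \<le> \<epsilon>1"

end

theory Submission
  imports Defs
begin


lemma adj_formula:
  fixes F :: "'a::euclidean_space \<Rightarrow> 'b::euclidean_space"
  assumes "linear F"
  shows "adjoint F u = (\<Sum>j\<in>Basis. (F j \<bullet> u) *\<^sub>R j)"
proof -
  have "adjoint F u = (\<Sum>j\<in>Basis. (adjoint F u \<bullet> j) *\<^sub>R j)"
    by (simp add: euclidean_representation)
  also have "\<dots> = (\<Sum>j\<in>Basis. (F j \<bullet> u) *\<^sub>R j)"
    using adjoint_works[OF assms] by (simp add: inner_commute)
  finally show ?thesis .
qed

lemma sv_lower: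
  fixes A :: "'a::euclidean_space \<Rightarrow> real^'m"
  assumes lin: "linear A" and pos: "sigma_min A > 0"
  shows "norm (adjoint A u) \<ge> sigma_min A * norm u"
proof (cases "u = 0")
  case True then show ?thesis by simp
next
  case False
  have mle: "CARD('m) \<le> DIM('a)"
    using pos unfolding sigma_min_def singular_value_def by (auto split: if_splits)
  define S where "S = {Inf {norm (A v) | v. v \<in> V \<and> norm v = 1} | V. subspace V \<and> dim V = CARD('m)}"
  have sm: "sigma_min A = Sup S"
    using mle unfolding sigma_min_def singular_value_def S_def by simp
  obtain V0 :: "'a set" where "subspace V0" "dim V0 = CARD('m)"
    using choose_subspace_of_subspace[of "CARD('m)" "UNIV::'a set"] mle by auto
  then have Sne: "S \<noteq> {}" unfolding S_def by blast
  have nu: "norm u > 0" using False by simp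
  have "Sup S \<le> norm (adjoint A u) / norm u"
  proof (rule cSup_least[OF Sne])
    fix s assume "s \<in> S"
    then obtain V where V: "subspace V" "dim V = CARD('m)"
      and s: "s = Inf {norm (A v) | v. v \<in> V \<and> norm v = 1}"
      unfolding S_def by blast
    let ?T = "{norm (A v) | v. v \<in> V \<and> norm v = 1}"
    have bdd: "bdd_below ?T" by (rule bdd_belowI[of _ 0]) auto
    have "\<exists>v. v \<in> V \<and> norm v = 1 \<and> norm (A v) \<le> norm (adjoint A u) / norm u"
    proof (cases "inj_on A V")
      case False
      then obtain a b where ab: "a \<in> V" "b \<in> V" "a \<noteq> b" "A a = A b"
        unfolding inj_on_def by blast
      define w where "w = a - b"
      have w: "w \<in> V" "w \<noteq> 0" "A w = 0"
        using ab V(1) lin by (auto simp: w_def subspace_diff linear_diff)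
      have "w /\<^sub>R norm w \<in> V" using w(1) V(1) by (simp add: subspace_scale)
      moreover have "norm (w /\<^sub>R norm w) = 1" using w(2) by simp
      moreover have "A (w /\<^sub>R norm w) = 0" using w(3) lin by (simp add: linear_scale)
      ultimately show ?thesis by (intro exI[of _ "w /\<^sub>R norm w"]) simp
    next
      case True
      have "dim (A ` V) = dim V"
        using True V(1) lin by (intro dim_image_eq) (auto, metis span_eq_iff)
      then have "dim (A ` V) = DIM(real^'m)" using V by simp
      then have "span (A ` V) = UNIV" using dim_eq_full by blast
      moreover have "subspace (A ` V)" using V(1) lin by (simp add: linear_subspace_image)
      ultimately have "A ` V = UNIV" by (metis span_eq_iff)
      then obtain v0 where v0: "v0 \<in> V" "A v0 = u" by (metis UNIV_I imageE)
      have v0nz: "v0 \<noteq> 0" using v0 False lin by (metis linear_0)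
      have "norm u ^ 2 = u \<bullet> A v0" using v0 by (simp add: power2_norm_eq_inner)
      also have "\<dots> = adjoint A u \<bullet> v0" using adjoint_works[OF lin] by (simp add: inner_commute)
      also have "\<dots> \<le> norm (adjoint A u) * norm v0" by (rule norm_cauchy_schwarz)
      finally have key: "norm u ^ 2 \<le> norm (adjoint A u) * norm v0" .
      have nv0: "norm v0 > 0" using v0nz by simp
      have "norm (A (v0 /\<^sub>R norm v0)) = norm u / norm v0"
        using v0 lin by (simp add: linear_scale divide_inverse_commute)
      also have "\<dots> \<le> norm (adjoint A u) / norm u"
        using key nu nv0 by (simp add: divide_simps power2_eq_square mult.commute)
      finally show ?thesis
        using v0 V(1) nv0 by (intro exI[of _ "v0 /\<^sub>R norm v0"]) (auto simp: subspace_scale)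
    qed
    then obtain v where "v \<in> V" "norm v = 1" "norm (A v) \<le> norm (adjoint A u) / norm u" by blast
    then show "s \<le> norm (adjoint A u) / norm u"
      unfolding s by (intro cInf_lower2[OF _ _ bdd]) auto
  qed
  then show ?thesis using sm nu by (simp add: pos_le_divide_eq)
qed




lemma pinv_char:
  fixes B :: "'b::euclidean_space \<Rightarrow> 'a::euclidean_space"
  assumes lin: "linear B" and inj: "\<And>l. B l = 0 \<Longrightarrow> l = 0"
  shows "(B (pinv B g) - g) \<bullet> B w = 0"
proof -
  obtain p q where p: "p \<in> span (range B)" and q: "\<And>w. w \<in> span (range B) \<Longrightarrow> orthogonal q w"
    and g: "g = p + q"
    using orthogonal_subspace_decomp_exists[of "range B" g] by metis
  have sr: "span (range B) = range B"
    using lin by (metis span_eq_iff linear_subspace_image subspace_UNIV)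
  obtain l where l: "p = B l" using p sr by auto
  have qB: "q \<bullet> B z = 0" for z using q[of "B z"] sr by (auto simp: orthogonal_def)
  have pyth: "(norm (B z - g))^2 = (norm (B z - B l))^2 + (norm q)^2" for z
  proof -
    have "B z - g = B (z - l) - q" using g l lin by (simp add: linear_diff)
    then have "(norm (B z - g))^2 = (B (z - l) - q) \<bullet> (B (z - l) - q)"
      by (simp add: power2_norm_eq_inner)
    also have "\<dots> = B (z - l) \<bullet> B (z - l) + q \<bullet> q"
      using qB[of "z - l"] by (simp add: inner_diff inner_commute)
    also have "\<dots> = (norm (B z - B l))^2 + (norm q)^2"
      using lin by (simp add: power2_norm_eq_inner linear_diff)
    finally show ?thesis .
  qed
  have lg: "B l - g = - q" using g l by simp
  have low: "norm q \<le> norm (B z - g)" for z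
    using pyth[of z] by (metis abs_norm_cancel le_add_same_cancel2 norm_ge_zero real_le_rsqrt real_sqrt_abs zero_le_power2)
  have uniq: "z = l" if "norm (B z - g) \<le> norm q" for z
  proof -
    have "(norm (B z - g))^2 \<le> (norm q)^2" using that by (simp add: power_mono)
    then have "(norm (B z - B l))^2 = 0" using pyth[of z] by (simp add: add_le_same_cancel2)
    then have "B (z - l) = 0" using lin by (simp add: linear_diff)
    then show ?thesis using inj by fastforce
  qed
  have P: "(\<forall>z. norm (B l - g) \<le> norm (B z - g)) \<and>
       (\<forall>z. (\<forall>z'. norm (B z - g) \<le> norm (B z' - g)) \<longrightarrow> norm l \<le> norm z)"
    using low uniq lg by (metis norm_minus_cancel order_refl)
  have "pinv B g = l"
    unfolding pinv_def
  proof (rule the_equality)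
    show "(\<forall>z. norm (B l - g) \<le> norm (B z - g)) \<and>
       (\<forall>z. (\<forall>z'. norm (B z - g) \<le> norm (B z' - g)) \<longrightarrow> norm l \<le> norm z)" by (rule P)
  next
    fix x assume "(\<forall>z. norm (B x - g) \<le> norm (B z - g)) \<and>
       (\<forall>z. (\<forall>z'. norm (B z - g) \<le> norm (B z' - g)) \<longrightarrow> norm x \<le> norm z)"
    then have "norm (B x - g) \<le> norm (B l - g)" by blast
    then show "x = l" using uniq lg by simp
  qed
  then show ?thesis using lg qB by simp
qed

lemma lam_eq:
  fixes A :: "'a::euclidean_space \<Rightarrow> 'b::euclidean_space"
  assumes lin: "linear A" and inj: "\<And>u. adjoint A u = 0 \<Longrightarrow> u = 0"
  shows "A (adjoint A (pinv (adjoint A) g) - g) = 0"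
proof -
  have la: "linear (adjoint A)" using lin by (rule adjoint_linear)
  have "A (adjoint A (pinv (adjoint A) g) - g) \<bullet> w = 0" for w
  proof -
    have "(adjoint A (pinv (adjoint A) g) - g) \<bullet> adjoint A w = 0"
      by (rule pinv_char[OF la inj])
    then show ?thesis by (simp only: adjoint_works[OF lin])
  qed
  then show ?thesis by (metis inner_eq_zero_iff)
qed




lemma smooth_D:
  assumes "smooth \<phi>"
  shows "\<phi> differentiable (at x)" "smooth (\<lambda>x. frechet_derivative \<phi> (at x) v)"
  using assms by (auto elim: smooth.cases)

lemma grad_formula:
  fixes f :: "'a::euclidean_space \<Rightarrow> real"
  assumes d: "f differentiable (at x)"
  shows "grad f x = (\<Sum>j\<in>Basis. frechet_derivative f (at x) j *\<^sub>R j)"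
    and "(f has_derivative (\<lambda>v. grad f x \<bullet> v)) (at x)"
proof -
  let ?D = "frechet_derivative f (at x)"
  let ?w = "(\<Sum>j\<in>Basis. ?D j *\<^sub>R j)"
  have fd: "(f has_derivative ?D) (at x)" using d by (simp add: frechet_derivative_works)
  have lin: "linear ?D" using fd has_derivative_linear by blast
  have eqD: "?D = (\<lambda>v. ?w \<bullet> v)"
  proof
    fix v
    have "?D v = ?D (\<Sum>j\<in>Basis. (v \<bullet> j) *\<^sub>R j)" by (simp add: euclidean_representation)
    also have "\<dots> = (\<Sum>j\<in>Basis. (v \<bullet> j) * ?D j)" using lin by (simp add: linear_sum linear_scale)
    also have "\<dots> = (\<Sum>j\<in>Basis. (?D j *\<^sub>R j) \<bullet> v)" by (rule sum.cong) (simp_all add: inner_commute)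
    also have "\<dots> = ?w \<bullet> v" by (simp only: inner_sum_left)
    finally show "?D v = ?w \<bullet> v" .
  qed
  have "grad f x = ?w"
    unfolding grad_def
  proof (rule the_equality)
    show "(f has_derivative (\<lambda>v. ?w \<bullet> v)) (at x)" using fd eqD by simp
  next
    fix w assume "(f has_derivative (\<lambda>v. w \<bullet> v)) (at x)"
    then have "(\<lambda>v. w \<bullet> v) = (\<lambda>v. ?w \<bullet> v)" using fd eqD frechet_derivative_at by metis
    then have "\<forall>v. w \<bullet> v = ?w \<bullet> v" by metis
    then show "w = ?w" by (metis euclidean_eqI)
  qed
  then show "grad f x = ?w" "(f has_derivative (\<lambda>v. grad f x \<bullet> v)) (at x)"
    using fd eqD by auto
qed




lemma lam_diff:
  fixes f :: "'a::euclidean_space \<Rightarrow> real" and h :: "'a \<Rightarrow> real^'m"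
  assumes fs: "smooth f" and hs: "smooth h" and pos: "sigma_min (Dh h x) > 0"
  shows "lam f h differentiable (at x)"
proof -
  define A where "A y = Dh h y" for y
  define Df where "Df y = frechet_derivative f (at y)" for y
  have linA: "linear (A y)" for y
    using smooth_D(1)[OF hs, of y] unfolding A_def Dh_def
    by (metis frechet_derivative_works has_derivative_linear)
  have dA: "(\<lambda>y. A y v) differentiable (at x)" for v
    using smooth_D(1)[OF smooth_D(2)[OF hs, of v]] unfolding A_def Dh_def .
  have dDf: "(\<lambda>y. Df y v) differentiable (at x)" for v
    using smooth_D(1)[OF smooth_D(2)[OF fs, of v]] unfolding Df_def .
  define M where "M y u = (\<Sum>j\<in>Basis. (A y j \<bullet> u) *\<^sub>R A y j)" for y u
  have M_eq: "M y u = A y (adjoint (A y) u)" for y u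
    using linA[of y] by (simp add: M_def adj_formula linear_sum linear_scale)
  have linM: "linear (M y)" for y
  proof -
    have "M y = A y \<circ> adjoint (A y)" using M_eq by (simp add: fun_eq_iff)
    then show ?thesis using linA adjoint_linear linear_compose by metis
  qed
  define b where "b y = (\<Sum>j\<in>Basis. Df y j *\<^sub>R A y j)" for y
  have b_eq: "b y = A y (grad f y)" for y
    using linA[of y] grad_formula(1)[OF smooth_D(1)[OF fs, of y]]
    by (simp add: b_def Df_def linear_sum linear_scale)
  define l where "l y = lam f h y" for y
  have Ml: "M y (l y) = b y" if inj: "\<forall>u. adjoint (A y) u = 0 \<longrightarrow> u = 0" for y
  proof -
    have "A y (adjoint (A y) (pinv (adjoint (A y)) (grad f y)) - grad f y) = 0"
      using lam_eq[OF linA[of y]] inj by blast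
    then have "A y (adjoint (A y) (l y)) = A y (grad f y)"
      using linA[of y] by (simp add: l_def lam_def A_def linear_diff)
    then show ?thesis by (simp add: M_eq b_eq)
  qed
  have dM: "(\<lambda>y. M y u) differentiable (at x)" for u
    unfolding M_def using dA by (intro differentiable_sum differentiable_scaleR differentiable_inner) auto
  have db: "b differentiable (at x)"
    unfolding b_def[abs_def] using dA dDf by (intro differentiable_sum differentiable_scaleR) auto
  define c where "c y = b y - M y (l x)" for y
  have dc: "c differentiable (at x)"
    unfolding c_def[abs_def] using db dM by (intro differentiable_diff) auto
  have Mcont: "((\<lambda>y. M y k) \<longlongrightarrow> M x k) (at x)" for k
    using dM[of k] by (metis continuous_at differentiable_imp_continuous_within)
  define e where "e y = (\<Sum>k\<in>Basis. norm (M y k - M x k))" for y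
  have e_lim: "(e \<longlongrightarrow> 0) (at x)"
    unfolding e_def[abs_def] by (intro tendsto_null_sum tendsto_norm_zero LIM_zero Mcont)
  have e_nn: "e y \<ge> 0" for y by (simp add: e_def sum_nonneg)
  have ex0: "e x = 0" by (simp add: e_def)
  have Ebound: "norm (M y d - M x d) \<le> e y * norm d" for y d
  proof -
    have "M y d - M x d = M y (\<Sum>k\<in>Basis. (d \<bullet> k) *\<^sub>R k) - M x (\<Sum>k\<in>Basis. (d \<bullet> k) *\<^sub>R k)"
      by (simp add: euclidean_representation)
    also have "\<dots> = (\<Sum>k\<in>Basis. (d \<bullet> k) *\<^sub>R (M y k - M x k))"
      using linM[of y] linM[of x] by (simp add: linear_sum linear_scale scaleR_diff_right sum_subtractf)
    finally have eq: "M y d - M x d = (\<Sum>k\<in>Basis. (d \<bullet> k) *\<^sub>R (M y k - M x k))" .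
    have "norm (M y d - M x d) \<le> (\<Sum>k\<in>Basis. norm ((d \<bullet> k) *\<^sub>R (M y k - M x k)))"
      unfolding eq by (rule norm_sum)
    also have "\<dots> \<le> (\<Sum>k\<in>Basis. norm d * norm (M y k - M x k))"
      by (rule sum_mono) (simp add: Basis_le_norm mult_right_mono)
    also have "\<dots> = e y * norm d" by (simp add: e_def sum_distrib_left mult.commute)
    finally show ?thesis .
  qed
  define \<sigma> where "\<sigma> = sigma_min (A x)"
  have \<sigma>pos: "\<sigma> > 0" using pos by (simp add: \<sigma>_def A_def)
  define s where "s = \<sigma>^2"
  have spos: "s > 0" using \<sigma>pos by (simp add: s_def)
  have Mlow: "s * norm d \<le> norm (M x d)" for d
  proof (cases "d = 0")
    case True then show ?thesis using linM[of x] by (simp add: linear_0)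
  next
    case False
    have sv: "\<sigma> * norm d \<le> norm (adjoint (A x) d)"
      using sv_lower[OF linA[of x]] \<sigma>pos by (simp add: \<sigma>_def)
    have "s * (norm d)^2 = (\<sigma> * norm d)^2" by (simp add: s_def power_mult_distrib)
    also have "\<dots> \<le> (norm (adjoint (A x) d))^2" using sv \<sigma>pos by (intro power_mono) auto
    also have "\<dots> = adjoint (A x) d \<bullet> adjoint (A x) d" by (simp add: power2_norm_eq_inner)
    also have "\<dots> = M x d \<bullet> d" by (simp add: M_eq adjoint_works[OF linA[of x]])
    also have "\<dots> \<le> norm (M x d) * norm d" by (rule norm_cauchy_schwarz)
    finally have "(s * norm d) * norm d \<le> norm (M x d) * norm d" by (simp add: power2_eq_square mult.assoc)
    then show ?thesis by (rule mult_right_le_imp_le) (use False in simp)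
  qed
  have ev: "eventually (\<lambda>y. e y < s/2) (at x)" by (rule order_tendstoD(2)[OF e_lim]) (use spos in simp)
  have injy: "\<forall>u. adjoint (A y) u = 0 \<longrightarrow> u = 0" if ey: "e y < s/2" for y
  proof (intro allI impI)
    fix u assume "adjoint (A y) u = 0"
    then have "M y u = 0" using linA[of y] by (simp add: M_eq linear_0)
    then have "norm (M x u) \<le> e y * norm u" using Ebound[of y u] by simp
    with Mlow[of u] have le: "s * norm u \<le> e y * norm u" by linarith
    show "u = 0"
    proof (rule ccontr)
      assume "u \<noteq> 0"
      then have "s \<le> e y" using le by (intro mult_right_le_imp_le[of s "norm u" "e y"]) auto
      then show False using ey spos by linarith
    qed
  qed
  have injM: "inj (M x)"
  proof (rule injI)
    fix a b assume "M x a = M x b"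
    then have "M x (a - b) = 0" using linM[of x] by (simp add: linear_diff)
    then have "s * norm (a - b) \<le> 0" using Mlow[of "a - b"] by simp
    then show "a = b" using spos by (simp add: mult_le_0_iff)
  qed
  obtain L where linL: "linear L" and LM: "\<And>d. L (M x d) = d"
    using linear_injective_left_inverse[OF linM[of x] injM] by (auto simp: fun_eq_iff)
  obtain K where Kpos: "K > 0" and LK: "\<And>z. norm (L z) \<le> norm z * K"
    using bounded_linear.pos_bounded[OF linear_conv_bounded_linear[THEN iffD1, OF linL]] by blast
  define Dc where "Dc = frechet_derivative c (at x)"
  have cD: "(c has_derivative Dc) (at x)" using dc by (simp add: Dc_def frechet_derivative_works)
  have blDc: "bounded_linear Dc" using cD has_derivative_bounded_linear by blast
  obtain K2 where K2: "K2 > 0" and DcK: "\<And>z. norm (Dc z) \<le> norm z * K2"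
    using bounded_linear.pos_bounded[OF blDc] by blast
  define r where "r y = norm (c y - c x - Dc (y - x)) / norm (y - x)" for y
  have r_lim: "(r \<longlongrightarrow> 0) (at x)" using cD unfolding has_derivative_iff_norm r_def[abs_def] by simp
  have r_nn: "r y \<ge> 0" for y by (simp add: r_def)
  have r_eq: "norm (c y - c x - Dc (y - x)) = r y * norm (y - x)" for y
  proof (cases "y = x")
    case True then show ?thesis using linear_0[OF linear_conv_bounded_linear[THEN iffD2, OF blDc]] by simp
  next
    case False then show ?thesis by (simp add: r_def)
  qed
  define G where "G y = K * r y + e y * ((2/s) * K * (K2 + r y))" for y
  have G_nn: "G y \<ge> 0" for y
    unfolding G_def using Kpos K2 spos r_nn[of y] e_nn[of y] by (intro add_nonneg_nonneg mult_nonneg_nonneg) auto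
  have G_lim: "(G \<longlongrightarrow> 0) (at x)"
  proof -
    have "(G \<longlongrightarrow> K * 0 + 0 * ((2/s) * K * (K2 + 0))) (at x)"
      unfolding G_def[abs_def] by (intro tendsto_intros r_lim e_lim)
    then show ?thesis by simp
  qed
  have main: "eventually (\<lambda>y. norm (norm (l y - l x - L (Dc (y - x))) / norm (y - x)) \<le> G y) (at x)"
    using ev
  proof (rule eventually_mono)
    fix y assume ey: "e y < s/2"
    define d where "d = l y - l x"
    have Mly: "M y (l y) = b y" by (rule Ml[OF injy[OF ey]])
    have Mlx: "M x (l x) = b x" by (rule Ml[OF injy]) (use spos ex0 in simp)
    have Mxd: "M x d = (c y - c x) - (M y d - M x d)"
      using linM[of x] linM[of y] Mly Mlx by (simp add: d_def c_def linear_diff algebra_simps)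
    have ncc: "norm (c y - c x) \<le> (K2 + r y) * norm (y - x)"
    proof -
      have "norm (c y - c x) \<le> norm (Dc (y - x)) + norm (c y - c x - Dc (y - x))"
        by (metis add_diff_cancel_left' norm_triangle_sub)
      also have "\<dots> \<le> norm (y - x) * K2 + r y * norm (y - x)" using DcK[of "y - x"] r_eq[of y] by simp
      finally show ?thesis by (simp add: algebra_simps)
    qed
    have nd: "norm d \<le> (2/s) * norm (c y - c x)"
    proof -
      have "s * norm d \<le> norm (c y - c x) + e y * norm d"
      proof -
        have "norm (M x d) \<le> norm (c y - c x) + norm (M y d - M x d)"
          by (subst Mxd) (rule norm_triangle_ineq4)
        then show ?thesis using Mlow[of d] Ebound[of y d] by linarith
      qed
      moreover have "e y * norm d \<le> (s/2) * norm d"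
        using ey by (intro mult_right_mono) auto
      ultimately have "(s/2) * norm d \<le> norm (c y - c x)" by linarith
      then show ?thesis using spos by (simp add: field_simps)
    qed
    have dL: "d - L (Dc (y - x)) = L (c y - c x - Dc (y - x)) - L (M y d - M x d)"
    proof -
      have "d = L (M x d)" by (rule LM[symmetric])
      also have "\<dots> = L (c y - c x) - L (M y d - M x d)" by (subst Mxd) (simp only: linear_diff[OF linL])
      finally show ?thesis using linL by (simp add: linear_diff linear_add algebra_simps)
    qed
    have "norm (d - L (Dc (y - x))) \<le> norm (L (c y - c x - Dc (y - x))) + norm (L (M y d - M x d))"
      unfolding dL by (rule norm_triangle_ineq4)
    also have "\<dots> \<le> K * (r y * norm (y - x)) + K * (e y * norm d)"
    proof -
      have "norm (L (c y - c x - Dc (y - x))) \<le> K * (r y * norm (y - x))"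
        using LK[of "c y - c x - Dc (y - x)"] r_eq[of y] by (simp add: mult.commute)
      moreover have "norm (L (M y d - M x d)) \<le> K * (e y * norm d)"
      proof -
        have "norm (L (M y d - M x d)) \<le> norm (M y d - M x d) * K" by (rule LK)
        also have "\<dots> \<le> (e y * norm d) * K" using Ebound[of y d] Kpos by (intro mult_right_mono) auto
        finally show ?thesis by (simp add: mult.commute)
      qed
      ultimately show ?thesis by linarith
    qed
    also have "\<dots> \<le> G y * norm (y - x)"
    proof -
      have "norm d \<le> (2/s) * ((K2 + r y) * norm (y - x))"
        using nd ncc spos by (smt (verit) divide_pos_pos mult_left_mono)
      then have "e y * norm d \<le> e y * ((2/s) * ((K2 + r y) * norm (y - x)))"
        using e_nn by (intro mult_left_mono) auto
      then have "K * (e y * norm d) \<le> K * (e y * ((2/s) * ((K2 + r y) * norm (y - x))))"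
        by (rule mult_left_mono) (use Kpos in simp)
      moreover have "G y * norm (y - x) = K * (r y * norm (y - x)) + K * (e y * ((2/s) * ((K2 + r y) * norm (y - x))))"
        by (simp add: G_def algebra_simps add_divide_distrib)
      ultimately show ?thesis by linarith
    qed
    finally have fin: "norm (d - L (Dc (y - x))) \<le> G y * norm (y - x)" .
    show "norm (norm (l y - l x - L (Dc (y - x))) / norm (y - x)) \<le> G y"
    proof (cases "y = x")
      case True then show ?thesis using G_nn[of y] by simp
    next
      case False
      then show ?thesis using fin by (simp add: d_def divide_le_eq)
    qed
  qed
  have "(l has_derivative (L \<circ> Dc)) (at x)"
    unfolding has_derivative_iff_norm
  proof
    show "bounded_linear (L \<circ> Dc)"
      using linL blDc linear_conv_bounded_linear bounded_linear_compose[of L Dc] by (auto simp: comp_def)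
    show "((\<lambda>y. norm (l y - l x - (L \<circ> Dc) (y - x)) / norm (y - x)) \<longlongrightarrow> 0) (at x)"
      using Lim_null_comparison[OF main G_lim] by simp
  qed
  then show ?thesis unfolding l_def[abs_def] differentiable_def by blast
qed




lemma grad_unique:
  fixes g :: "'a::euclidean_space \<Rightarrow> real"
  assumes "(g has_derivative (\<lambda>v. w \<bullet> v)) (at x)"
  shows "grad g x = w"
  unfolding grad_def
proof (rule the_equality)
  show "(g has_derivative (\<lambda>v. w \<bullet> v)) (at x)" by (rule assms)
next
  fix w' assume "(g has_derivative (\<lambda>v. w' \<bullet> v)) (at x)"
  then have "(\<lambda>v. w' \<bullet> v) = (\<lambda>v. w \<bullet> v)" using assms frechet_derivative_at by metis
  then have "\<forall>v. w' \<bullet> v = w \<bullet> v" by metis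
  then show "w' = w" by (metis euclidean_eqI)
qed

theorem mainTheorem2:
  fixes f :: "'a::euclidean_space \<Rightarrow> real" and h :: "'a \<Rightarrow> real^'m"
    and R sig \<epsilon>1 \<beta> :: real and x :: 'a
  assumes f_smooth: "smooth f" and h_smooth: "smooth h"
    and A1: "R > 0" "sig > 0" "\<forall>y. norm (h y) \<le> R \<longrightarrow> sigma_min (Dh h y) \<ge> sig"
    and eps: "\<epsilon>1 \<ge> 0"
    and xC: "norm (h x) \<le> R"
    and beta: "\<beta> > max (beta2 f h x) (beta3 h x)"
    and small: "norm (grad (fletcher f h \<beta>) x) \<le> \<epsilon>1"
  shows "norm (h x) \<le> \<epsilon>1 / (\<beta> * sigma_min (Dh h x))
    \<and> \<epsilon>1 / (\<beta> * sigma_min (Dh h x)) \<le> \<epsilon>1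
    \<and> norm (gradM f h x) \<le> (1 + C_lam f h x / (\<beta> * sigma_min (Dh h x))) * \<epsilon>1
    \<and> (1 + C_lam f h x / (\<beta> * sigma_min (Dh h x))) * \<epsilon>1 \<le> 2 * \<epsilon>1
    \<and> approx_crit f h \<epsilon>1 (2 * \<epsilon>1) x"
proof -
  define A where "A = Dh h x"
  define \<sigma> where "\<sigma> = sigma_min A"
  have \<sigma>pos: "\<sigma> > 0" using A1 xC by (auto simp: \<sigma>_def A_def intro: less_le_trans)
  have dh: "(h has_derivative A) (at x)"
    using smooth_D(1)[OF h_smooth, of x] unfolding A_def Dh_def by (simp add: frechet_derivative_works)
  have linA: "linear A" using dh has_derivative_linear by blast
  have svA: "\<sigma> * norm u \<le> norm (adjoint A u)" for u
    using sv_lower[OF linA] \<sigma>pos by (simp add: \<sigma>_def)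
  have injA: "\<And>u. adjoint A u = 0 \<Longrightarrow> u = 0"
  proof -
    fix u assume "adjoint A u = 0"
    then have "\<sigma> * norm u \<le> 0" using svA[of u] by simp
    then show "u = 0" using \<sigma>pos by (simp add: mult_le_0_iff)
  qed
  define l0 where "l0 = lam f h x"
  define gM where "gM = gradM f h x"
  have gM_eq: "gM = grad f x - adjoint A l0" by (simp add: gM_def gradM_def A_def l0_def)
  have AgM: "A gM = 0"
  proof -
    have "A (adjoint A (pinv (adjoint A) (grad f x)) - grad f x) = 0" by (rule lam_eq[OF linA injA])
    then have "A (adjoint A l0 - grad f x) = 0" by (simp add: l0_def lam_def A_def)
    then show ?thesis using linA by (simp add: gM_eq linear_diff)
  qed
  have gM_orth: "gM \<bullet> adjoint A u = 0" for u
    using AgM by (simp add: adjoint_works[OF linA])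
  have ldiff: "lam f h differentiable (at x)"
    using lam_diff[OF f_smooth h_smooth] \<sigma>pos by (simp add: \<sigma>_def A_def)
  define Dl where "Dl = frechet_derivative (lam f h) (at x)"
  have dl: "(lam f h has_derivative Dl) (at x)" using ldiff by (simp add: Dl_def frechet_derivative_works)
  have blDl: "bounded_linear Dl" using dl has_derivative_bounded_linear by blast
  have linDl: "linear Dl" using blDl linear_conv_bounded_linear by blast
  define C where "C = C_lam f h x"
  have C_eq: "C = onorm Dl" by (simp add: C_def C_lam_def Dl_def)
  have Cnn: "C \<ge> 0" using onorm_pos_le[OF blDl] C_eq by simp
  have DlC: "norm (Dl z) \<le> C * norm z" for z using onorm[OF blDl] C_eq by simp
  define hx where "hx = h x"
  define P where "P = adjoint A hx"
  define Q where "Q = adjoint Dl hx"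
  define w where "w = gM - Q + (2 * \<beta>) *\<^sub>R P"
  have d1: "(f has_derivative (\<lambda>v. grad f x \<bullet> v)) (at x)"
    by (rule grad_formula(2)[OF smooth_D(1)[OF f_smooth]])
  have d2: "((\<lambda>y. h y \<bullet> lam f h y) has_derivative (\<lambda>v. h x \<bullet> Dl v + A v \<bullet> lam f h x)) (at x)"
    using has_derivative_inner[OF dh dl] by simp
  have d3: "((\<lambda>y. h y \<bullet> h y) has_derivative (\<lambda>v. h x \<bullet> A v + A v \<bullet> h x)) (at x)"
    using has_derivative_inner[OF dh dh] by simp
  have d4: "((\<lambda>y. \<beta> * (h y \<bullet> h y)) has_derivative (\<lambda>v. \<beta> * (h x \<bullet> A v + A v \<bullet> h x))) (at x)"
    using has_derivative_scaleR_right[OF d3, of \<beta>] by simp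
  have fe: "fletcher f h \<beta> = (\<lambda>y. f y - h y \<bullet> lam f h y + \<beta> * (h y \<bullet> h y))"
    by (simp add: fun_eq_iff fletcher_def power2_norm_eq_inner)
  have d5: "(fletcher f h \<beta> has_derivative
      (\<lambda>v. grad f x \<bullet> v - (h x \<bullet> Dl v + A v \<bullet> lam f h x) + \<beta> * (h x \<bullet> A v + A v \<bullet> h x))) (at x)"
    unfolding fe by (intro has_derivative_add has_derivative_diff d1 d2 d4)
  have eqD: "(\<lambda>v. grad f x \<bullet> v - (h x \<bullet> Dl v + A v \<bullet> lam f h x) + \<beta> * (h x \<bullet> A v + A v \<bullet> h x))
      = (\<lambda>v. w \<bullet> v)"
  proof
    fix v
    have "w \<bullet> v = grad f x \<bullet> v - adjoint A l0 \<bullet> v - adjoint Dl hx \<bullet> v + (2 * \<beta>) * (adjoint A hx \<bullet> v)"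
      by (simp add: w_def gM_eq P_def Q_def inner_diff_left inner_add_left)
    also have "\<dots> = grad f x \<bullet> v - l0 \<bullet> A v - hx \<bullet> Dl v + (2 * \<beta>) * (hx \<bullet> A v)"
      by (simp add: adjoint_clauses(2)[OF linA] adjoint_clauses(2)[OF linDl])
    finally show "grad f x \<bullet> v - (h x \<bullet> Dl v + A v \<bullet> lam f h x) + \<beta> * (h x \<bullet> A v + A v \<bullet> h x) = w \<bullet> v"
      by (simp add: hx_def l0_def inner_commute algebra_simps)
  qed
  have gw: "grad (fletcher f h \<beta>) x = w"
    by (rule grad_unique) (use d5 eqD in simp)
  have nw: "norm w \<le> \<epsilon>1" using small gw by simp
  have PQ: "norm Q \<le> C * norm hx"
  proof (cases "Q = 0")
    case True then show ?thesis using Cnn by simp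
  next
    case False
    have "norm Q ^ 2 = Q \<bullet> Q" by (simp add: power2_norm_eq_inner)
    also have "\<dots> = Dl Q \<bullet> hx" by (simp add: Q_def adjoint_works[OF linDl])
    also have "\<dots> \<le> norm (Dl Q) * norm hx" by (rule norm_cauchy_schwarz)
    also have "\<dots> \<le> (C * norm Q) * norm hx" using DlC[of Q] by (rule mult_right_mono) auto
    finally have "norm Q * norm Q \<le> (C * norm hx) * norm Q" by (simp add: power2_eq_square algebra_simps)
    then show ?thesis by (rule mult_right_le_imp_le[of _ "norm Q"]) (use False in auto)
  qed
  have PP: "\<sigma> * norm hx \<le> norm P" using svA by (simp add: P_def)
  have b3: "beta3 h x = 1 / \<sigma>" by (simp add: beta3_def \<sigma>_def A_def)
  have b2: "beta2 f h x = C / \<sigma>" by (simp add: beta2_def \<sigma>_def A_def C_def)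
  have bs1: "\<beta> * \<sigma> > 1" using beta b3 \<sigma>pos by (simp add: field_simps)
  have bsC: "\<beta> * \<sigma> > C" using beta b2 \<sigma>pos by (simp add: field_simps)
  have bpos: "\<beta> > 0"
  proof (rule ccontr)
    assume "\<not> \<beta> > 0"
    then have "\<beta> * \<sigma> \<le> 0" using \<sigma>pos by (simp add: mult_nonpos_nonneg)
    then show False using bs1 by simp
  qed
  have bspos: "\<beta> * \<sigma> > 0" using bs1 by simp
  have c1: "\<beta> * \<sigma> * norm hx \<le> \<epsilon>1"
  proof (cases "P = 0")
    case True
    then have "hx = 0" using PP \<sigma>pos by (simp add: mult_le_0_iff)
    then show ?thesis using eps by simp
  next
    case False
    have "w \<bullet> P = - (Q \<bullet> P) + (2 * \<beta>) * (P \<bullet> P)"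
      using gM_orth[of hx] by (simp add: w_def P_def inner_diff_left inner_add_left)
    then have "(2 * \<beta>) * (norm P * norm P) = w \<bullet> P + Q \<bullet> P"
      by (simp add: power2_norm_eq_inner[symmetric] power2_eq_square)
    also have "\<dots> \<le> norm w * norm P + norm Q * norm P"
      using norm_cauchy_schwarz[of w P] norm_cauchy_schwarz[of Q P] by linarith
    also have "\<dots> \<le> (\<epsilon>1 + C * norm hx) * norm P"
      using nw PQ by (simp add: distrib_right mult_right_mono add_mono)
    finally have "((2 * \<beta>) * norm P) * norm P \<le> (\<epsilon>1 + C * norm hx) * norm P" by (simp add: mult.assoc)
    then have "(2 * \<beta>) * norm P \<le> \<epsilon>1 + C * norm hx"
      by (rule mult_right_le_imp_le[of _ "norm P"]) (use False in auto)
    moreover have "(2 * \<beta>) * (\<sigma> * norm hx) \<le> (2 * \<beta>) * norm P" using PP by (rule mult_left_mono) (use bpos in auto)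
    moreover have "C * norm hx \<le> (\<beta> * \<sigma>) * norm hx" by (rule mult_right_mono) (use bsC in auto)
    ultimately show ?thesis by (simp add: algebra_simps)
  qed
  have claim1: "norm (h x) \<le> \<epsilon>1 / (\<beta> * sigma_min (Dh h x))"
    using c1 bspos by (simp add: hx_def \<sigma>_def A_def pos_le_divide_eq mult.commute)
  have claim2: "\<epsilon>1 / (\<beta> * sigma_min (Dh h x)) \<le> \<epsilon>1"
    using bs1 eps by (simp add: \<sigma>_def A_def divide_le_eq mult_le_cancel_left1 mult.commute)
  have ngM: "norm gM \<le> \<epsilon>1 + C * norm hx"
  proof (cases "gM = 0")
    case True then show ?thesis using eps Cnn by simp
  next
    case False
    have "gM = w + Q - (2 * \<beta>) *\<^sub>R P" by (simp add: w_def)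
    then have "gM \<bullet> gM = gM \<bullet> w + gM \<bullet> Q"
      using gM_orth[of hx] by (simp add: P_def inner_diff_right inner_add_right)
    also have "\<dots> \<le> norm gM * norm w + norm gM * norm Q"
      using norm_cauchy_schwarz[of gM w] norm_cauchy_schwarz[of gM Q] by linarith
    also have "\<dots> \<le> norm gM * (\<epsilon>1 + C * norm hx)"
      using nw PQ by (simp add: distrib_left mult_left_mono add_mono)
    finally have "norm gM * norm gM \<le> (\<epsilon>1 + C * norm hx) * norm gM"
      by (simp add: power2_norm_eq_inner[symmetric] power2_eq_square mult.commute)
    then show ?thesis by (rule mult_right_le_imp_le[of _ "norm gM"]) (use False in auto)
  qed
  have claim3: "norm (gradM f h x) \<le> (1 + C_lam f h x / (\<beta> * sigma_min (Dh h x))) * \<epsilon>1"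
  proof -
    have "C * norm hx \<le> C * (\<epsilon>1 / (\<beta> * \<sigma>))"
      by (rule mult_left_mono[OF _ Cnn]) (use claim1 in \<open>simp add: hx_def \<sigma>_def A_def\<close>)
    then have "norm gM \<le> \<epsilon>1 + C * (\<epsilon>1 / (\<beta> * \<sigma>))" using ngM by linarith
    then show ?thesis by (simp add: gM_def C_def \<sigma>_def A_def algebra_simps)
  qed
  have claim4: "(1 + C_lam f h x / (\<beta> * sigma_min (Dh h x))) * \<epsilon>1 \<le> 2 * \<epsilon>1"
  proof -
    have "C / (\<beta> * \<sigma>) \<le> 1" using bsC bspos by (simp add: divide_le_eq)
    then have "(1 + C / (\<beta> * \<sigma>)) * \<epsilon>1 \<le> 2 * \<epsilon>1" using eps mult_right_mono[of "1 + C / (\<beta> * \<sigma>)" 2 \<epsilon>1] by simp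
    then show ?thesis by (simp add: C_def \<sigma>_def A_def)
  qed
  have surj: "range A = UNIV"
  proof (rule ccontr)
    assume ne: "range A \<noteq> UNIV"
    have sub: "subspace (range A)" using linA by (simp add: linear_subspace_image)
    have "dim (range A) \<noteq> DIM(real^'m)"
    proof
      assume "dim (range A) = DIM(real^'m)"
      then have "span (range A) = UNIV" using dim_eq_full by blast
      then show False using ne sub by (metis span_eq_iff)
    qed
    then have "dim (range A) < DIM(real^'m)" using dim_subset_UNIV[of "range A"] by simp
    then obtain u :: "real^'m" where u: "u \<noteq> 0" "\<And>y. y \<in> span (range A) \<Longrightarrow> orthogonal u y"
      by (rule orthogonal_to_subspace_exists) blast+
    have "adjoint A u \<bullet> v = 0" for v
      using u(2)[of "A v"] by (simp add: adjoint_clauses(2)[OF linA] orthogonal_def span_base)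
    then have "adjoint A u = 0" by (metis inner_eq_zero_iff)
    then show False using injA u(1) by blast
  qed
  have fr: "x \<in> fullrank_set h"
    using surj by (simp add: fullrank_set_def A_def)
  have claim5: "approx_crit f h \<epsilon>1 (2 * \<epsilon>1) x"
    unfolding approx_crit_def using fr claim1 claim2 claim3 claim4 by linarith
  show ?thesis using claim1 claim2 claim3 claim4 claim5 by blast
qed


end
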